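(* Let $L\geq 2$, $d,M,J,N\geq 1$, let $X\in\mathbb{R}^{d\times N}$, and let $A\in\mathbb{R}^{J\times N}$ have one-hot columns. Suppose $\sigma:\mathbb{R}\to\mathbb{R}$ is Lipschitz continuous, i.e. $|\sigma(z_1)-\sigma(z_2)|\leq B|z_1-z_2|$ for some $B>0$ and all $z_1,z_2\in\mathbb{R}$. Then for all $W_1\in\mathbb{R}^{M\times d}$, $W_2,\dots,W_{L-1}\in\mathbb{R}^{M\times M}$, $W_L\in\mathbb{R}^{J\times M}$, $b_1,\dots,b_{L-1}\in\mathbb{R}^{M}$ and $c_1,\dots,c_{L-1}\in\mathbb{R}^{M\times N}$, $$\mathcal{L}(\phi_{\mathrm{FNN}}(X;\theta),A)\leq C_B\cdot\sqrt{L-1}\cdot \mathcal{L}^{\mathrm{FNN}}_{\mathrm S},$$ where $C_B=\max\{\sqrt2,\,2B,\,2B^{L-1}\}$.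
   Context: Softmax and cross-entropy: for $\boldsymbol z\in\mathbb{R}^J$ and one-hot $\boldsymbol\alpha\in\mathbb{R}^J$ (entries in $\{0,1\}$ summing to $1$), $\ell(\boldsymbol z,\boldsymbol\alpha)=-\sum_j\alpha_j\ln\big(e^{z_j}/\sum_{k}e^{z_k}\big)$. For $Z=[\boldsymbol z_1\cdots\boldsymbol z_N]$, $A=[\boldsymbol\alpha_1\cdots\boldsymbol\alpha_N]$: $\mathcal{L}_{\mathrm{vec}}(Z,A)=[\ell(\boldsymbol z_n,\boldsymbol\alpha_n)]_{n=1}^N\in\mathbb{R}^N$ and $\mathcal{L}(Z,A)=\frac1N\sum_{n=1}^N\ell(\boldsymbol z_n,\boldsymbol\alpha_n)$. The fully connected network with parameters $\theta=\{W_L,W_l,b_l\}_{l=1}^{L-1}$ is $\phi_{\mathrm{FNN}}(\boldsymbol x;\theta)=W_L\sigma(W_{L-1}\sigma(\cdots\sigma(W_1\boldsymbol x+b_1)\cdots)+b_{L-1})$ with $\sigma$ applied entrywise, and $\phi_{\mathrm{FNN}}(X;\theta)$ is the matrix whose $n$-th column is $\phi_{\mathrm{FNN}}$ applied to the $n$-th column of $X$. With $\mathbf 1\in\mathbb{R}^N$ the all-ones vector, set weights $\omega_l=\prod_{j=l+1}^{L}\|W_j\|_{\mathrm F}^2$ for $l=1,\dots,L-1$, and $$S=\|\mathcal{L}_{\mathrm{vec}}(W_L\sigma(c_{L-1}),A)\|_2^2+\sum_{l=2}^{L-1}\omega_l\|W_l\sigma(c_{l-1})+b_l\mathbf 1^\top-c_l\|_{\mathrm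 F}^2+\omega_1\|W_1X+b_1\mathbf 1^\top-c_1\|_{\mathrm F}^2,$$ and the layer separation loss $\mathcal{L}^{\mathrm{FNN}}_{\mathrm S}=\frac{1}{\sqrt N}S^{1/2}$. *)

theory Defs
  imports Complex_Main
begin

text \<open>Matrices are functions nat \<Rightarrow> nat \<Rightarrow> real (row, column), vectors are
functions nat \<Rightarrow> real; all sums range over the explicit dimensions, so entries
outside the index ranges are irrelevant. Layers are indexed 1..L:
W l is the l-th weight matrix (W 1 is M x d, W l is M x M for 2 \<le> l \<le> L-1,
W L is J x M), b l \<in> R^M, c l \<in> R^(M x N).\<close>

definition ce_loss :: "nat \<Rightarrow> (nat \<Rightarrow> real) \<Rightarrow> (nat \<Rightarrow> real) \<Rightarrow> real" where
  "ce_loss J z \<alpha> = - (\<Sum>j<J. \<alpha> j * ln (exp (z j) / (\<Sum>k<J. exp (z k))))"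

definition one_hot_cols :: "nat \<Rightarrow> nat \<Rightarrow> (nat \<Rightarrow> nat \<Rightarrow> real) \<Rightarrow> bool" where
  "one_hot_cols J N A \<longleftrightarrow>
     (\<forall>n<N. (\<forall>j<J. A j n = 0 \<or> A j n = 1) \<and> (\<Sum>j<J. A j n) = 1)"

definition mean_ce :: "nat \<Rightarrow> nat \<Rightarrow> (nat \<Rightarrow> nat \<Rightarrow> real) \<Rightarrow> (nat \<Rightarrow> nat \<Rightarrow> real) \<Rightarrow> real" where
  "mean_ce J N Z A = (1 / real N) * (\<Sum>n<N. ce_loss J (\<lambda>j. Z j n) (\<lambda>j. A j n))"

fun fnn_hidden :: "(real \<Rightarrow> real) \<Rightarrow> nat \<Rightarrow> nat \<Rightarrow> (nat \<Rightarrow> nat \<Rightarrow> nat \<Rightarrow> real)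
    \<Rightarrow> (nat \<Rightarrow> nat \<Rightarrow> real) \<Rightarrow> (nat \<Rightarrow> real) \<Rightarrow> nat \<Rightarrow> nat \<Rightarrow> real" where
  "fnn_hidden \<sigma> d M W b x 0 = x"
| "fnn_hidden \<sigma> d M W b x (Suc l) =
     (\<lambda>i. \<sigma> ((\<Sum>k<(if l = 0 then d else M). W (Suc l) i k * fnn_hidden \<sigma> d M W b x l k)
              + b (Suc l) i))"

definition phi_fnn :: "(real \<Rightarrow> real) \<Rightarrow> nat \<Rightarrow> nat \<Rightarrow> nat \<Rightarrow> (nat \<Rightarrow> nat \<Rightarrow> nat \<Rightarrow> real)
    \<Rightarrow> (nat \<Rightarrow> nat \<Rightarrow> real) \<Rightarrow> (nat \<Rightarrow> real) \<Rightarrow> nat \<Rightarrow> real" where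
  "phi_fnn \<sigma> L d M W b x = (\<lambda>j. \<Sum>k<M. W L j k * fnn_hidden \<sigma> d M W b x (L - 1) k)"

definition phi_fnn_mat :: "(real \<Rightarrow> real) \<Rightarrow> nat \<Rightarrow> nat \<Rightarrow> nat \<Rightarrow> (nat \<Rightarrow> nat \<Rightarrow> nat \<Rightarrow> real)
    \<Rightarrow> (nat \<Rightarrow> nat \<Rightarrow> real) \<Rightarrow> (nat \<Rightarrow> nat \<Rightarrow> real) \<Rightarrow> nat \<Rightarrow> nat \<Rightarrow> real" where
  "phi_fnn_mat \<sigma> L d M W b X = (\<lambda>j n. phi_fnn \<sigma> L d M W b (\<lambda>i. X i n) j)"

definition frob2 :: "nat \<Rightarrow> nat \<Rightarrow> (nat \<Rightarrow> nat \<Rightarrow> real) \<Rightarrow> real" where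
  "frob2 m n Q = (\<Sum>i<m. \<Sum>k<n. (Q i k)^2)"

definition sep_weight :: "nat \<Rightarrow> nat \<Rightarrow> nat \<Rightarrow> nat \<Rightarrow> (nat \<Rightarrow> nat \<Rightarrow> nat \<Rightarrow> real) \<Rightarrow> nat \<Rightarrow> real" where
  "sep_weight L d M J W l =
     (\<Prod>j\<in>{l+1..L}. frob2 (if j = L then J else M) (if j = 1 then d else M) (W j))"

definition sep_S :: "(real \<Rightarrow> real) \<Rightarrow> nat \<Rightarrow> nat \<Rightarrow> nat \<Rightarrow> nat \<Rightarrow> nat
    \<Rightarrow> (nat \<Rightarrow> nat \<Rightarrow> real) \<Rightarrow> (nat \<Rightarrow> nat \<Rightarrow> real)
    \<Rightarrow> (nat \<Rightarrow> nat \<Rightarrow> nat \<Rightarrow> real) \<Rightarrow> (nat \<Rightarrow> nat \<Rightarrow> real) \<Rightarrow> (nat \<Rightarrow> nat \<Rightarrow> nat \<Rightarrow> real) \<Rightarrow> real" where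
  "sep_S \<sigma> L d M J N X A W b c =
     (\<Sum>n<N. (ce_loss J (\<lambda>j. \<Sum>k<M. W L j k * \<sigma> (c (L - 1) k n)) (\<lambda>j. A j n))^2)
   + (\<Sum>l\<in>{2..L - 1}. sep_weight L d M J W l *
        (\<Sum>i<M. \<Sum>n<N. ((\<Sum>k<M. W l i k * \<sigma> (c (l - 1) k n)) + b l i - c l i n)^2))
   + sep_weight L d M J W 1 *
        (\<Sum>i<M. \<Sum>n<N. ((\<Sum>k<d. W 1 i k * X k n) + b 1 i - c 1 i n)^2)"

definition layer_sep_loss :: "(real \<Rightarrow> real) \<Rightarrow> nat \<Rightarrow> nat \<Rightarrow> nat \<Rightarrow> nat \<Rightarrow> nat
    \<Rightarrow> (nat \<Rightarrow> nat \<Rightarrow> real) \<Rightarrow> (nat \<Rightarrow> nat \<Rightarrow> real)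
    \<Rightarrow> (nat \<Rightarrow> nat \<Rightarrow> nat \<Rightarrow> real) \<Rightarrow> (nat \<Rightarrow> nat \<Rightarrow> real) \<Rightarrow> (nat \<Rightarrow> nat \<Rightarrow> nat \<Rightarrow> real) \<Rightarrow> real" where
  "layer_sep_loss \<sigma> L d M J N X A W b c = (1 / sqrt (real N)) * sqrt (sep_S \<sigma> L d M J N X A W b c)"

end

theory Submission imports Defs "HOL-Analysis.L2_Norm" begin

lemma L2_set_abs: "L2_set (\<lambda>i. \<bar>f i\<bar>) A = L2_set f A" unfolding L2_set_def by simp

lemma L2_set_sq: "(L2_set f A)^2 = (\<Sum>i\<in>A. (f i)^2)"
  unfolding L2_set_def by (simp add: sum_nonneg)

lemma matvec:
  "L2_set (\<lambda>i. \<Sum>k<n. Q i k * v k) {..<m} \<le> sqrt (frob2 m n Q) * L2_set v {..<n}"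
proof -
  have row: "(\<Sum>k<n. Q i k * v k)^2 \<le> (\<Sum>k<n. (Q i k)^2) * (\<Sum>k<n. (v k)^2)" for i
  proof -
    have "\<bar>\<Sum>k<n. Q i k * v k\<bar> \<le> (\<Sum>k<n. \<bar>Q i k\<bar> * \<bar>v k\<bar>)"
      by (rule order_trans[OF sum_abs]) (simp add: abs_mult)
    also have "\<dots> \<le> L2_set (Q i) {..<n} * L2_set v {..<n}" by (rule L2_set_mult_ineq)
    finally have "\<bar>\<Sum>k<n. Q i k * v k\<bar> \<le> \<bar>L2_set (Q i) {..<n} * L2_set v {..<n}\<bar>" by simp
    then have "(\<Sum>k<n. Q i k * v k)^2 \<le> (L2_set (Q i) {..<n} * L2_set v {..<n})^2"
      using abs_le_square_iff by blast
    then show ?thesis by (simp add: power_mult_distrib L2_set_sq)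
  qed
  have "(\<Sum>i<m. (\<Sum>k<n. Q i k * v k)^2) \<le> (\<Sum>i<m. (\<Sum>k<n. (Q i k)^2) * (\<Sum>k<n. (v k)^2))"
    by (rule sum_mono) (rule row)
  also have "\<dots> = frob2 m n Q * (\<Sum>k<n. (v k)^2)" by (simp add: frob2_def sum_distrib_right)
  finally have "sqrt (\<Sum>i<m. (\<Sum>k<n. Q i k * v k)^2) \<le> sqrt (frob2 m n Q * (\<Sum>k<n. (v k)^2))"
    by (rule real_sqrt_le_mono)
  then show ?thesis unfolding L2_set_def by (simp add: real_sqrt_mult)
qed

lemma lipvec:
  assumes "B > 0" and "\<And>z1 z2. \<bar>\<sigma> z1 - \<sigma> z2\<bar> \<le> B * \<bar>z1 - z2\<bar>"
  shows "L2_set (\<lambda>i. \<sigma> (p i) - \<sigma> (q i)) A \<le> B * L2_set (\<lambda>i. p i - q i) A"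
proof -
  have "L2_set (\<lambda>i. \<sigma> (p i) - \<sigma> (q i)) A = L2_set (\<lambda>i. \<bar>\<sigma> (p i) - \<sigma> (q i)\<bar>) A"
    by (simp add: L2_set_abs)
  also have "\<dots> \<le> L2_set (\<lambda>i. B * \<bar>p i - q i\<bar>) A"
    by (rule L2_set_mono) (use assms in auto)
  also have "\<dots> = B * L2_set (\<lambda>i. p i - q i) A"
    using assms(1) by (simp add: L2_set_right_distrib[symmetric] L2_set_abs)
  finally show ?thesis .
qed

lemma sqrt_prod: "sqrt (\<Prod>j\<in>K. f j) = (\<Prod>j\<in>K. sqrt (f j))"
  by (induction K rule: infinite_finite_induct) (auto simp: real_sqrt_mult)

lemma cs_plus:
  fixes a v :: "nat \<Rightarrow> real"
  shows "x + (\<Sum>m\<in>K. a m * v m) \<le> sqrt (1 + (\<Sum>m\<in>K. (a m)^2)) * sqrt (x^2 + (\<Sum>m\<in>K. (v m)^2))"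
proof -
  define p where "p = L2_set a K"
  define q where "q = L2_set v K"
  have p0: "p \<ge> 0" and q0: "q \<ge> 0" unfolding p_def q_def by auto
  have "(\<Sum>m\<in>K. a m * v m) \<le> (\<Sum>m\<in>K. \<bar>a m\<bar> * \<bar>v m\<bar>)"
    by (rule sum_mono) (simp add: abs_mult[symmetric])
  also have "\<dots> \<le> p * q" unfolding p_def q_def by (rule L2_set_mult_ineq)
  finally have 1: "x + (\<Sum>m\<in>K. a m * v m) \<le> \<bar>x\<bar> + p * q" by simp
  have "(\<bar>x\<bar> + p * q)^2 \<le> (1 + p^2) * (x^2 + q^2)"
  proof -
    have "0 \<le> (p * \<bar>x\<bar> - q)^2" by simp
    then show ?thesis by (simp add: algebra_simps power2_eq_square)
  qed
  then have "\<bar>x\<bar> + p * q \<le> sqrt ((1 + p^2) * (x^2 + q^2))"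
    using p0 q0 by (simp add: real_le_rsqrt)
  also have "\<dots> = sqrt (1 + (\<Sum>m\<in>K. (a m)^2)) * sqrt (x^2 + (\<Sum>m\<in>K. (v m)^2))"
    unfolding p_def q_def L2_set_sq by (simp add: real_sqrt_mult)
  finally show ?thesis using 1 by linarith
qed

lemma sum_le_sqrtN:
  fixes T :: "nat \<Rightarrow> real"
  shows "(\<Sum>n<N. T n) \<le> sqrt (real N) * sqrt (\<Sum>n<N. (T n)^2)"
proof -
  have "(\<Sum>n<N. T n) \<le> (\<Sum>n<N. \<bar>1::real\<bar> * \<bar>T n\<bar>)" by (rule sum_mono) simp
  also have "\<dots> \<le> L2_set (\<lambda>_. 1) {..<N} * L2_set T {..<N}" by (rule L2_set_mult_ineq)
  finally show ?thesis by (simp add: L2_set_constant L2_set_def)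
qed


lemma ce_form:
  assumes "J \<ge> 1" and "(\<Sum>j<J. \<alpha> j) = 1"
  shows "ce_loss J z \<alpha> = ln (\<Sum>k<J. exp (z k)) - (\<Sum>j<J. \<alpha> j * z j)"
proof -
  have S: "(\<Sum>k<J. exp (z k)) > 0" using assms(1) by (intro sum_pos) (auto simp: lessThan_empty_iff)
  have "ce_loss J z \<alpha> = - (\<Sum>j<J. \<alpha> j * (z j - ln (\<Sum>k<J. exp (z k))))"
    unfolding ce_loss_def using S by (simp add: ln_div)
  also have "\<dots> = ln (\<Sum>k<J. exp (z k)) * (\<Sum>j<J. \<alpha> j) - (\<Sum>j<J. \<alpha> j * z j)"
    by (simp add: algebra_simps sum_subtractf sum_distrib_left sum_distrib_right)
  finally show ?thesis using assms(2) by simp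
qed

lemma ce_lip:
  assumes J: "J \<ge> 1" and a01: "\<forall>j<J. \<alpha> j = 0 \<or> \<alpha> j = 1" and a1: "(\<Sum>j<J. \<alpha> j) = 1"
  shows "ce_loss J z \<alpha> \<le> ce_loss J z' \<alpha> + sqrt 2 * L2_set (\<lambda>j. z j - z' j) {..<J}"
proof -
  define S where "S = (\<Sum>k<J. exp (z k))"
  define S' where "S' = (\<Sum>k<J. exp (z' k))"
  have S0: "S > 0" unfolding S_def using J by (intro sum_pos) (auto simp: lessThan_empty_iff)
  have S'0: "S' > 0" unfolding S'_def using J by (intro sum_pos) (auto simp: lessThan_empty_iff)
  define p where "p k = exp (z k) / S" for k
  have p0: "p k \<ge> 0" for k unfolding p_def using S0 by simp
  have p1: "(\<Sum>k<J. p k) = 1" unfolding p_def using S0 by (simp add: sum_divide_distrib[symmetric] S_def)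
  have ple: "p k \<le> 1" if "k < J" for k
  proof -
    have "p k \<le> (\<Sum>k<J. p k)" using that p0 by (intro member_le_sum) auto
    then show ?thesis using p1 by simp
  qed
  define t where "t k = z' k - z k" for k
  define m where "m = (\<Sum>k<J. p k * t k)"
  have "S' / S = (\<Sum>k<J. p k * exp (t k))"
    unfolding S'_def p_def t_def sum_divide_distrib
    by (rule sum.cong) (auto simp: exp_diff)
  also have "\<dots> \<ge> (\<Sum>k<J. p k * (exp m * (1 + (t k - m))))"
  proof (rule sum_mono)
    fix k
    have "exp (t k) = exp m * exp (t k - m)" by (simp add: exp_diff)
    also have "\<dots> \<ge> exp m * (1 + (t k - m))"
      by (intro mult_left_mono exp_ge_add_one_self) auto
    finally show "p k * (exp m * (1 + (t k - m))) \<le> p k * exp (t k)"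
      using p0 by (intro mult_left_mono) auto
  qed
  also have "(\<Sum>k<J. p k * (exp m * (1 + (t k - m)))) = exp m * ((\<Sum>k<J. p k) + (\<Sum>k<J. p k * t k) - m * (\<Sum>k<J. p k))"
    by (simp add: algebra_simps sum.distrib sum_subtractf sum_distrib_left sum_distrib_right)
  also have "\<dots> = exp m" using p1 unfolding m_def[symmetric] by simp
  finally have "exp m \<le> S' / S" .
  then have "m \<le> ln (S' / S)" using S0 S'0 by (simp add: ln_ge_iff)
  then have key: "ln S - ln S' \<le> - m" using S0 S'0 by (simp add: ln_div)
  have "ce_loss J z \<alpha> - ce_loss J z' \<alpha> = ln S - ln S' - (\<Sum>j<J. \<alpha> j * (z j - z' j))"
    unfolding ce_form[OF J a1] S_def S'_def by (simp add: algebra_simps sum_subtractf)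
  also have "\<dots> \<le> (\<Sum>k<J. (p k - \<alpha> k) * (z k - z' k))"
    using key unfolding m_def t_def by (simp add: algebra_simps sum_subtractf sum.distrib)
  also have "\<dots> \<le> (\<Sum>k<J. \<bar>p k - \<alpha> k\<bar> * \<bar>z k - z' k\<bar>)"
    by (rule sum_mono) (simp add: abs_mult[symmetric])
  also have "\<dots> \<le> L2_set (\<lambda>k. p k - \<alpha> k) {..<J} * L2_set (\<lambda>k. z k - z' k) {..<J}"
    by (rule L2_set_mult_ineq)
  also have "\<dots> \<le> sqrt 2 * L2_set (\<lambda>k. z k - z' k) {..<J}"
  proof (rule mult_right_mono)
    have "(\<Sum>k<J. (p k - \<alpha> k)^2) \<le> (\<Sum>k<J. p k + \<alpha> k)"
    proof (rule sum_mono)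
      fix k assume "k \<in> {..<J}"
      then have "p k \<le> 1" "\<alpha> k = 0 \<or> \<alpha> k = 1" using ple a01 by auto
      moreover have "p k * p k \<le> p k" using p0[of k] \<open>p k \<le> 1\<close> by (simp add: mult_left_le)
      ultimately show "(p k - \<alpha> k)^2 \<le> p k + \<alpha> k" using p0[of k]
        by (auto simp: power2_eq_square algebra_simps)
    qed
    also have "\<dots> = 2" using p1 a1 by (simp add: sum.distrib)
    finally show "L2_set (\<lambda>k. p k - \<alpha> k) {..<J} \<le> sqrt 2"
      unfolding L2_set_def by (rule real_sqrt_le_mono)
  qed simp
  finally show ?thesis by simp
qed


definition pre where
  "pre \<sigma> d M W b x l i = (\<Sum>k<(if l = 1 then d else M). W l i k * fnn_hidden \<sigma> d M W b x (l - 1) k) + b l i"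

definition resid where
  "resid \<sigma> d M W b x cc m i = (if m = 1 then (\<Sum>k<d. W 1 i k * x k) else (\<Sum>k<M. W m i k * \<sigma> (cc (m - 1) k))) + b m i - cc m i"

lemma hidden_pre: "l \<ge> 1 \<Longrightarrow> fnn_hidden \<sigma> d M W b x l = (\<lambda>i. \<sigma> (pre \<sigma> d M W b x l i))"
  by (cases l) (auto simp: pre_def)

lemma propagate:
  assumes B: "B > 0" and lip: "\<And>z1 z2. \<bar>\<sigma> z1 - \<sigma> z2\<bar> \<le> B * \<bar>z1 - z2\<bar>"
  shows "l \<ge> 1 \<Longrightarrow> L2_set (\<lambda>i. pre \<sigma> d M W b x l i - cc l i) {..<M}
     \<le> (\<Sum>m\<in>{1..l}. B^(l-m) * (\<Prod>j\<in>{m+1..l}. sqrt (frob2 M M (W j))) * L2_set (resid \<sigma> d M W b x cc m) {..<M})"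
proof (induction l)
  case 0 then show ?case by simp
next
  case (Suc l)
  show ?case
  proof (cases "l = 0")
    case True
    then show ?thesis by (simp add: pre_def resid_def)
  next
    case False
    then have l1: "l \<ge> 1" by simp
    define F where "F = sqrt (frob2 M M (W (Suc l)))"
    define D where "D k = \<sigma> (pre \<sigma> d M W b x l k) - \<sigma> (cc l k)" for k
    have F0: "F \<ge> 0" unfolding F_def frob2_def by (simp add: sum_nonneg)
    have eq: "pre \<sigma> d M W b x (Suc l) i - cc (Suc l) i = resid \<sigma> d M W b x cc (Suc l) i + (\<Sum>k<M. W (Suc l) i k * D k)" for i
      using l1 False unfolding pre_def resid_def D_def
      by (simp add: hidden_pre[OF l1] algebra_simps sum_subtractf pre_def)
    have "L2_set (\<lambda>i. pre \<sigma> d M W b x (Suc l) i - cc (Suc l) i) {..<M}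
        \<le> L2_set (resid \<sigma> d M W b x cc (Suc l)) {..<M} + L2_set (\<lambda>i. \<Sum>k<M. W (Suc l) i k * D k) {..<M}"
      unfolding eq by (rule L2_set_triangle_ineq)
    also have "L2_set (\<lambda>i. \<Sum>k<M. W (Suc l) i k * D k) {..<M} \<le> F * L2_set D {..<M}"
      unfolding F_def by (rule matvec)
    also have "L2_set D {..<M} \<le> B * L2_set (\<lambda>i. pre \<sigma> d M W b x l i - cc l i) {..<M}"
      unfolding D_def by (rule lipvec[OF B lip])
    also have "L2_set (\<lambda>i. pre \<sigma> d M W b x l i - cc l i) {..<M}
       \<le> (\<Sum>m\<in>{1..l}. B^(l-m) * (\<Prod>j\<in>{m+1..l}. sqrt (frob2 M M (W j))) * L2_set (resid \<sigma> d M W b x cc m) {..<M})"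
      by (rule Suc.IH[OF l1])
    finally have 1: "L2_set (\<lambda>i. pre \<sigma> d M W b x (Suc l) i - cc (Suc l) i) {..<M}
      \<le> L2_set (resid \<sigma> d M W b x cc (Suc l)) {..<M} + F * (B * (\<Sum>m\<in>{1..l}. B^(l-m) * (\<Prod>j\<in>{m+1..l}. sqrt (frob2 M M (W j))) * L2_set (resid \<sigma> d M W b x cc m) {..<M}))"
      using F0 B by (simp add: mult_left_mono)
    have "F * (B * (\<Sum>m\<in>{1..l}. B^(l-m) * (\<Prod>j\<in>{m+1..l}. sqrt (frob2 M M (W j))) * L2_set (resid \<sigma> d M W b x cc m) {..<M}))
      = (\<Sum>m\<in>{1..l}. B^(Suc l-m) * (\<Prod>j\<in>{m+1..Suc l}. sqrt (frob2 M M (W j))) * L2_set (resid \<sigma> d M W b x cc m) {..<M})"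
      unfolding sum_distrib_left
    proof (rule sum.cong)
      fix m assume m: "m \<in> {1..l}"
      then have "B^(Suc l - m) = B * B^(l-m)" by (simp add: Suc_diff_le)
      moreover have "(\<Prod>j\<in>{m+1..Suc l}. sqrt (frob2 M M (W j))) = (\<Prod>j\<in>{m+1..l}. sqrt (frob2 M M (W j))) * F"
        using m unfolding F_def by (simp add: prod.cl_ivl_Suc)
      ultimately show "F * (B * (B ^ (l - m) * (\<Prod>j\<in>{m+1..l}. sqrt (frob2 M M (W j))) * L2_set (resid \<sigma> d M W b x cc m) {..<M}))
        = B^(Suc l-m) * (\<Prod>j\<in>{m+1..Suc l}. sqrt (frob2 M M (W j))) * L2_set (resid \<sigma> d M W b x cc m) {..<M}"
        by (simp add: algebra_simps)
    qed simp
    then show ?thesis using 1 by (simp add: sum.cl_ivl_Suc)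
  qed
qed


lemma sqrt_sep_weight:
  assumes "L \<ge> 2" "m \<in> {1..L-1}"
  shows "sqrt (sep_weight L d M J W m) = sqrt (frob2 J M (W L)) * (\<Prod>j\<in>{m+1..L-1}. sqrt (frob2 M M (W j)))"
proof -
  have LS: "L = Suc (L - 1)" using assms by simp
  have "sep_weight L d M J W m = (\<Prod>j\<in>{m+1..Suc (L-1)}. frob2 (if j = L then J else M) (if j = 1 then d else M) (W j))"
    unfolding sep_weight_def using LS by simp
  also have "\<dots> = (\<Prod>j\<in>{m+1..L-1}. frob2 (if j = L then J else M) (if j = 1 then d else M) (W j)) * frob2 J M (W L)"
    using assms by (subst prod.cl_ivl_Suc) (auto simp: LS[symmetric])
  also have "(\<Prod>j\<in>{m+1..L-1}. frob2 (if j = L then J else M) (if j = 1 then d else M) (W j)) = (\<Prod>j\<in>{m+1..L-1}. frob2 M M (W j))"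
    using assms by (intro prod.cong) auto
  finally show ?thesis by (simp add: real_sqrt_mult sqrt_prod)
qed

lemma column:
  assumes L: "L \<ge> 2" and J: "J \<ge> 1" and a01: "\<forall>j<J. \<alpha> j = 0 \<or> \<alpha> j = 1" and a1: "(\<Sum>j<J. \<alpha> j) = 1"
    and B: "B > 0" and lip: "\<And>z1 z2. \<bar>\<sigma> z1 - \<sigma> z2\<bar> \<le> B * \<bar>z1 - z2\<bar>"
  shows "ce_loss J (\<lambda>j. \<Sum>k<M. W L j k * fnn_hidden \<sigma> d M W b x (L-1) k) \<alpha>
    \<le> ce_loss J (\<lambda>j. \<Sum>k<M. W L j k * \<sigma> (cc (L-1) k)) \<alpha>
       + sqrt 2 * (\<Sum>m\<in>{1..L-1}. B^(L-m) * sqrt (sep_weight L d M J W m) * L2_set (resid \<sigma> d M W b x cc m) {..<M})"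
proof -
  have L1: "L - 1 \<ge> 1" using L by simp
  define D where "D k = \<sigma> (pre \<sigma> d M W b x (L-1) k) - \<sigma> (cc (L-1) k)" for k
  define FL where "FL = sqrt (frob2 J M (W L))"
  have F0: "FL \<ge> 0" unfolding FL_def frob2_def by (simp add: sum_nonneg)
  have dz: "(\<Sum>k<M. W L j k * fnn_hidden \<sigma> d M W b x (L-1) k) - (\<Sum>k<M. W L j k * \<sigma> (cc (L-1) k))
     = (\<Sum>k<M. W L j k * D k)" for j
    unfolding D_def hidden_pre[OF L1] by (simp add: algebra_simps sum_subtractf)
  have "L2_set (\<lambda>j. (\<Sum>k<M. W L j k * fnn_hidden \<sigma> d M W b x (L-1) k) - (\<Sum>k<M. W L j k * \<sigma> (cc (L-1) k))) {..<J}
     = L2_set (\<lambda>j. \<Sum>k<M. W L j k * D k) {..<J}" unfolding dz ..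
  also have "\<dots> \<le> FL * L2_set D {..<M}" unfolding FL_def by (rule matvec)
  also have "L2_set D {..<M} \<le> B * L2_set (\<lambda>i. pre \<sigma> d M W b x (L-1) i - cc (L-1) i) {..<M}"
    unfolding D_def by (rule lipvec[OF B lip])
  also have "L2_set (\<lambda>i. pre \<sigma> d M W b x (L-1) i - cc (L-1) i) {..<M}
     \<le> (\<Sum>m\<in>{1..L-1}. B^(L-1-m) * (\<Prod>j\<in>{m+1..L-1}. sqrt (frob2 M M (W j))) * L2_set (resid \<sigma> d M W b x cc m) {..<M})"
    by (rule propagate[OF B lip L1])
  finally have 1: "L2_set (\<lambda>j. (\<Sum>k<M. W L j k * fnn_hidden \<sigma> d M W b x (L-1) k) - (\<Sum>k<M. W L j k * \<sigma> (cc (L-1) k))) {..<J}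
     \<le> FL * (B * (\<Sum>m\<in>{1..L-1}. B^(L-1-m) * (\<Prod>j\<in>{m+1..L-1}. sqrt (frob2 M M (W j))) * L2_set (resid \<sigma> d M W b x cc m) {..<M}))"
    using F0 B by (simp add: mult_left_mono)
  have 2: "FL * (B * (\<Sum>m\<in>{1..L-1}. B^(L-1-m) * (\<Prod>j\<in>{m+1..L-1}. sqrt (frob2 M M (W j))) * L2_set (resid \<sigma> d M W b x cc m) {..<M}))
     = (\<Sum>m\<in>{1..L-1}. B^(L-m) * sqrt (sep_weight L d M J W m) * L2_set (resid \<sigma> d M W b x cc m) {..<M})"
    unfolding sum_distrib_left
  proof (rule sum.cong)
    fix m assume m: "m \<in> {1..L-1}"
    then have "L - m = Suc (L-1-m)" using L by auto
    then have "B^(L-m) = B * B^(L-1-m)" by simp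
    then show "FL * (B * (B^(L-1-m) * (\<Prod>j\<in>{m+1..L-1}. sqrt (frob2 M M (W j))) * L2_set (resid \<sigma> d M W b x cc m) {..<M}))
      = B^(L-m) * sqrt (sep_weight L d M J W m) * L2_set (resid \<sigma> d M W b x cc m) {..<M}"
      unfolding sqrt_sep_weight[OF L m] FL_def by (simp add: algebra_simps)
  qed simp
  have 3: "sqrt 2 * L2_set (\<lambda>j. (\<Sum>k<M. W L j k * fnn_hidden \<sigma> d M W b x (L-1) k) - (\<Sum>k<M. W L j k * \<sigma> (cc (L-1) k))) {..<J}
     \<le> sqrt 2 * (\<Sum>m\<in>{1..L-1}. B^(L-m) * sqrt (sep_weight L d M J W m) * L2_set (resid \<sigma> d M W b x cc m) {..<M})"
    using 1 2 by (intro mult_left_mono) auto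
  show ?thesis
    using ce_lip[OF J a01 a1, of "\<lambda>j. \<Sum>k<M. W L j k * fnn_hidden \<sigma> d M W b x (L-1) k" "\<lambda>j. \<Sum>k<M. W L j k * \<sigma> (cc (L-1) k)"]
      3 by linarith
qed


lemma const_bound:
  assumes L: "L \<ge> 2" and B: "B > 0"
  shows "sqrt (1 + (\<Sum>m\<in>{1..L-1}. (sqrt 2 * B^(L-m))^2)) \<le> Max {sqrt 2, 2 * B, 2 * B ^ (L - 1)} * sqrt (real L - 1)"
proof -
  define C where "C = Max {sqrt 2, 2 * B, 2 * B ^ (L - 1)}"
  have C1: "sqrt 2 \<le> C" and C2: "2 * B \<le> C" and C3: "2 * B^(L-1) \<le> C" unfolding C_def by auto
  have C0: "C \<ge> 0" using C1 real_sqrt_ge_zero[of 2] by linarith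
  have "(sqrt 2)^2 \<le> C^2" by (rule power_mono[OF C1]) simp
  then have Csq: "2 \<le> C^2" by simp
  have bk: "2 * (sqrt 2 * B^(L-m))^2 \<le> C^2" if m: "m \<in> {1..L-1}" for m
  proof -
    have k: "1 \<le> L - m" "L - m \<le> L - 1" using m L by auto
    have "B^(L-m) \<le> C/2"
    proof (cases "B \<le> 1")
      case True
      then have "B^(L-m) \<le> B^1" using B k by (intro power_decreasing) auto
      then show ?thesis using C2 by simp
    next
      case False
      then have "B^(L-m) \<le> B^(L-1)" using k by (intro power_increasing) auto
      then show ?thesis using C3 by simp
    qed
    then have "(B^(L-m))^2 \<le> (C/2)^2" using B by (intro power_mono) auto
    then have "4 * (B^(L-m))^2 \<le> C^2" by (simp add: power_divide)
    then show ?thesis by (simp add: power_mult_distrib)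
  qed
  have "(\<Sum>m\<in>{1..L-1}. (sqrt 2 * B^(L-m))^2) \<le> (\<Sum>m\<in>{1..L-1}. C^2 / 2)"
    by (rule sum_mono) (use bk in force)
  also have "\<dots> = real (L-1) * C^2 / 2" by simp
  finally have "1 + (\<Sum>m\<in>{1..L-1}. (sqrt 2 * B^(L-m))^2) \<le> C^2 / 2 + real (L-1) * C^2 / 2"
    using Csq by linarith
  also have "\<dots> \<le> real (L-1) * C^2"
  proof -
    have "1 \<le> real (L-1)" using L by simp
    then have "1 * (C^2/2) \<le> real (L-1) * (C^2/2)" by (intro mult_right_mono) auto
    then show ?thesis by simp
  qed
  finally have "sqrt (1 + (\<Sum>m\<in>{1..L-1}. (sqrt 2 * B^(L-m))^2)) \<le> sqrt (real (L-1) * C^2)"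
    by (rule real_sqrt_le_mono)
  also have "\<dots> = C * sqrt (real L - 1)" using C0 L by (simp add: real_sqrt_mult of_nat_diff mult.commute)
  finally show ?thesis unfolding C_def .
qed


theorem theorem3p1:
  fixes \<sigma> :: "real \<Rightarrow> real" and B :: real and L d M J N :: nat
    and X A :: "nat \<Rightarrow> nat \<Rightarrow> real"
    and W :: "nat \<Rightarrow> nat \<Rightarrow> nat \<Rightarrow> real" and b :: "nat \<Rightarrow> nat \<Rightarrow> real"
    and c :: "nat \<Rightarrow> nat \<Rightarrow> nat \<Rightarrow> real"
  assumes "L \<ge> 2" and "d \<ge> 1" and "M \<ge> 1" and "J \<ge> 1" and "N \<ge> 1"
    and "one_hot_cols J N A"
    and "B > 0" and "\<And>z1 z2. \<bar>\<sigma> z1 - \<sigma> z2\<bar> \<le> B * \<bar>z1 - z2\<bar>"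
  shows "mean_ce J N (phi_fnn_mat \<sigma> L d M W b X) A
         \<le> Max {sqrt 2, 2 * B, 2 * B ^ (L - 1)} * sqrt (real L - 1)
            * layer_sep_loss \<sigma> L d M J N X A W b c"
proof -
  note L = assms(1) and J = assms(4) and oh = assms(6) and B = assms(7) and lip = assms(8)
  define T where "T n = ce_loss J (\<lambda>j. \<Sum>k<M. W L j k * \<sigma> (c (L - 1) k n)) (\<lambda>j. A j n)" for n
  define r where "r m n = L2_set (resid \<sigma> d M W b (\<lambda>i. X i n) (\<lambda>l i. c l i n) m) {..<M}" for m n
  define G where "G m = sqrt (sep_weight L d M J W m)" for m
  define a where "a m = sqrt 2 * B^(L-m)" for m
  define Q where "Q m = (\<Sum>n<N. (r m n)^2)" for m
  define K where "K = {1..L-1}"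
  define S where "S = sep_S \<sigma> L d M J N X A W b c"
  have sw0: "sep_weight L d M J W m \<ge> 0" for m
    unfolding sep_weight_def frob2_def by (intro prod_nonneg sum_nonneg) auto
  have G0: "G m \<ge> 0" for m unfolding G_def using sw0 by simp
  have a0: "a m \<ge> 0" for m unfolding a_def using B by simp
  have col: "ce_loss J (\<lambda>j. phi_fnn_mat \<sigma> L d M W b X j n) (\<lambda>j. A j n)
      \<le> T n + (\<Sum>m\<in>K. a m * G m * r m n)" if n: "n < N" for n
  proof -
    have "\<forall>j<J. A j n = 0 \<or> A j n = 1" "(\<Sum>j<J. A j n) = 1" using oh n unfolding one_hot_cols_def by auto
    from column[OF L J this B lip, where M=M and W=W and d=d and b=b and x="\<lambda>i. X i n" and cc="\<lambda>l i. c l i n"]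
    show ?thesis unfolding phi_fnn_mat_def phi_fnn_def T_def K_def a_def G_def r_def
      by (simp add: sum_distrib_left algebra_simps)
  qed
  have "(\<Sum>n<N. ce_loss J (\<lambda>j. phi_fnn_mat \<sigma> L d M W b X j n) (\<lambda>j. A j n))
     \<le> (\<Sum>n<N. T n + (\<Sum>m\<in>K. a m * G m * r m n))" by (rule sum_mono) (use col in auto)
  also have "\<dots> = (\<Sum>n<N. T n) + (\<Sum>m\<in>K. a m * G m * (\<Sum>n<N. r m n))"
    by (simp add: sum.distrib sum_distrib_left sum.swap[of _ K])
  also have "\<dots> \<le> sqrt (real N) * sqrt (\<Sum>n<N. (T n)^2) + (\<Sum>m\<in>K. a m * G m * (sqrt (real N) * sqrt (Q m)))"
  proof (rule add_mono)
    show "(\<Sum>n<N. T n) \<le> sqrt (real N) * sqrt (\<Sum>n<N. (T n)^2)" by (rule sum_le_sqrtN)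
    show "(\<Sum>m\<in>K. a m * G m * (\<Sum>n<N. r m n)) \<le> (\<Sum>m\<in>K. a m * G m * (sqrt (real N) * sqrt (Q m)))"
      unfolding Q_def by (intro sum_mono mult_left_mono sum_le_sqrtN) (use a0 G0 in auto)
  qed
  also have "\<dots> = sqrt (real N) * (sqrt (\<Sum>n<N. (T n)^2) + (\<Sum>m\<in>K. a m * (G m * sqrt (Q m))))"
    by (simp add: algebra_simps sum_distrib_left)
  also have "\<dots> \<le> sqrt (real N) * (sqrt (1 + (\<Sum>m\<in>K. (a m)^2)) * sqrt ((sqrt (\<Sum>n<N. (T n)^2))^2 + (\<Sum>m\<in>K. (G m * sqrt (Q m))^2)))"
    by (intro mult_left_mono cs_plus) auto
  also have "(sqrt (\<Sum>n<N. (T n)^2))^2 + (\<Sum>m\<in>K. (G m * sqrt (Q m))^2) = S"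
  proof -
    have Q0: "Q m \<ge> 0" for m unfolding Q_def by (simp add: sum_nonneg)
    have e1: "(G m * sqrt (Q m))^2 = sep_weight L d M J W m * Q m" for m
      unfolding G_def using sw0 Q0 by (simp add: power_mult_distrib)
    have Qm: "Q m = (\<Sum>i<M. \<Sum>n<N. (resid \<sigma> d M W b (\<lambda>i. X i n) (\<lambda>l i. c l i n) m i)^2)" for m
      unfolding Q_def r_def L2_set_sq by (rule sum.swap)
    have K: "K = insert 1 {2..L-1}" unfolding K_def using L by auto
    have "(\<Sum>m\<in>K. (G m * sqrt (Q m))^2) = sep_weight L d M J W 1 * Q 1 + (\<Sum>m\<in>{2..L-1}. sep_weight L d M J W m * Q m)"
      unfolding e1 K by simp
    moreover have "(\<Sum>m\<in>{2..L-1}. sep_weight L d M J W m * Q m) = (\<Sum>l\<in>{2..L - 1}. sep_weight L d M J W l *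
        (\<Sum>i<M. \<Sum>n<N. ((\<Sum>k<M. W l i k * \<sigma> (c (l - 1) k n)) + b l i - c l i n)^2))"
      by (intro sum.cong) (auto simp: Qm resid_def)
    moreover have "Q 1 = (\<Sum>i<M. \<Sum>n<N. ((\<Sum>k<d. W 1 i k * X k n) + b 1 i - c 1 i n)^2)"
      by (simp add: Qm resid_def)
    ultimately show ?thesis unfolding S_def sep_S_def T_def by (simp add: sum_nonneg)
  qed
  finally have main: "(\<Sum>n<N. ce_loss J (\<lambda>j. phi_fnn_mat \<sigma> L d M W b X j n) (\<lambda>j. A j n))
      \<le> sqrt (real N) * (sqrt (1 + (\<Sum>m\<in>K. (a m)^2)) * sqrt S)" .
  have cb: "sqrt (1 + (\<Sum>m\<in>K. (a m)^2)) \<le> Max {sqrt 2, 2 * B, 2 * B ^ (L - 1)} * sqrt (real L - 1)"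
    unfolding K_def a_def by (rule const_bound[OF L B])
  have N0: "real N > 0" using assms(5) by simp
  have S0: "S \<ge> 0" unfolding S_def sep_S_def
    by (intro add_nonneg_nonneg sum_nonneg mult_nonneg_nonneg sw0) auto
  have "mean_ce J N (phi_fnn_mat \<sigma> L d M W b X) A
      = (1 / real N) * (\<Sum>n<N. ce_loss J (\<lambda>j. phi_fnn_mat \<sigma> L d M W b X j n) (\<lambda>j. A j n))"
    unfolding mean_ce_def ..
  also have "\<dots> \<le> (1 / real N) * (sqrt (real N) * (sqrt (1 + (\<Sum>m\<in>K. (a m)^2)) * sqrt S))"
    using main N0 by (intro mult_left_mono) auto
  also have "\<dots> = sqrt (1 + (\<Sum>m\<in>K. (a m)^2)) * ((1 / sqrt (real N)) * sqrt S)"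
    using N0 by (simp add: field_simps real_sqrt_divide)
  also have "\<dots> \<le> Max {sqrt 2, 2 * B, 2 * B ^ (L - 1)} * sqrt (real L - 1) * ((1 / sqrt (real N)) * sqrt S)"
    using cb S0 N0 by (intro mult_right_mono) auto
  finally show ?thesis unfolding layer_sep_loss_def S_def .
qed

end
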